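(* Let $(Z_0,\dots,Z_H)$ be a process on an abstract state space with transitions $Z_{j+1}\mid Z_j\sim K_j(\cdot\mid Z_j)$ satisfying $\eta_{\chi^2}(K_j)\le\eta<1$ for all $j$. Let $\mathcal{T}\subseteq\{1,\dots,H-1\}$ be an inspection schedule with $|\mathcal{T}|=m$ and inspection outputs $Y_u=g_u(Z_u)$, $u\in\mathcal{T}\cup\{H\}$. Fix $n\ge1$, $\Delta^2\in(0,\infty)$, $\epsilon\in(0,1/2)$, and suppose that for every step $t\in\{0,\dots,H-1\}$ we are given two hypotheses under which $Z_t$ has distributions $P^{(0)}_t\ll P^{(1)}_t$ with $\chi^2(P^{(0)}_t\|P^{(1)}_t)=\Delta^2$ and the kernels $K_j$, $j\ge t$, and the maps $g_u$ are common to both. If every step $t$ is $(n,\epsilon)$-distinguishable, i.e. some test based on $n$ i.i.d. samples of $Y_{u(t)}$, where $u(t)=\min\{u\in\mathcal{T}\cup\{H\}:u>t\}$, distinguishes its two hypotheses with total testing error at most $\epsilon$, then $$m\ge\Big\lceil\frac{H}{H_{\mathrm{crit}}(\epsilon)}\Big\rceil-1,\qquad H_{\mathrm{crit}}(\epsilon)=\frac{\ln(n\Delta^2)-2\ln(1-\epsilon)}{\ln(1/\eta)}.$$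
   Context: $\chi^2(P\|Q)=\int(dP/dQ-1)^2dQ$; for a Markov kernel $K$, $\eta_{\chi^2}(K)=\sup\{\chi^2(PK\|QK)/\chi^2(P\|Q):P\ll Q,\ 0<\chi^2(P\|Q)<\infty\}$ with $PK$ the pushforward. An inspection schedule is a strictly increasing subset of $\{1,\dots,H-1\}$. The total testing error of a test $\psi$ is $\mathbb{P}_{H_0}(\psi=1)+\mathbb{P}_{H_1}(\psi=0)$. *)

theory Defs
  imports "HOL-Probability.Probability"
begin

text \<open>Note: in Isabelle,
  absolutely_continuous Q P means P << Q, and RN_deriv Q P is dP/dQ.\<close>
definition chi2 :: "'a measure \<Rightarrow> 'a measure \<Rightarrow> ennreal" where
  "chi2 P Q = (if absolutely_continuous Q P
      then (\<integral>\<^sup>+ x. ennreal ((enn2real (RN_deriv Q P x) - 1)\<^sup>2) \<partial>Q)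
      else \<infinity>)"

definition eta_chi2 :: "'a measure \<Rightarrow> ('a \<Rightarrow> 'a measure) \<Rightarrow> ennreal" where
  "eta_chi2 M K = (SUP PQ \<in> {(P, Q). P \<in> space (prob_algebra M) \<and> Q \<in> space (prob_algebra M)
        \<and> absolutely_continuous Q P \<and> 0 < chi2 P Q \<and> chi2 P Q < \<infinity>}.
      chi2 (fst PQ \<bind> K) (snd PQ \<bind> K) / chi2 (fst PQ) (snd PQ))"

primrec evolve :: "(nat \<Rightarrow> 'a \<Rightarrow> 'a measure) \<Rightarrow> nat \<Rightarrow> nat \<Rightarrow> 'a measure \<Rightarrow> 'a measure" where
  "evolve K t 0 P = P"
| "evolve K t (Suc k) P = evolve K t k P \<bind> K (t + k)"

definition next_insp :: "nat set \<Rightarrow> nat \<Rightarrow> nat \<Rightarrow> nat" where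
  "next_insp T H t = Min {u \<in> T \<union> {H}. t < u}"

text \<open>Total testing error of a test psi (true = reject H0) between Q0 (H0) and Q1 (H1),
  based on n i.i.d. samples.\<close>
definition total_error :: "nat \<Rightarrow> 'b measure \<Rightarrow> 'b measure \<Rightarrow> ((nat \<Rightarrow> 'b) \<Rightarrow> bool) \<Rightarrow> real" where
  "total_error n Q0 Q1 psi =
     measure (PiM {..<n} (\<lambda>_. Q0)) {x \<in> space (PiM {..<n} (\<lambda>_. Q0)). psi x}
   + measure (PiM {..<n} (\<lambda>_. Q1)) {x \<in> space (PiM {..<n} (\<lambda>_. Q1)). \<not> psi x}"

definition distinguishable ::
  "'a measure \<Rightarrow> (nat \<Rightarrow> 'b measure) \<Rightarrow> (nat \<Rightarrow> 'a \<Rightarrow> 'a measure) \<Rightarrow> (nat \<Rightarrow> 'a \<Rightarrow> 'b)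
    \<Rightarrow> nat set \<Rightarrow> nat \<Rightarrow> 'a measure \<Rightarrow> 'a measure \<Rightarrow> nat \<Rightarrow> real \<Rightarrow> nat \<Rightarrow> bool" where
  "distinguishable M N K g T H P0 P1 n eps t =
    (let u = next_insp T H t;
         Q0 = distr (evolve K t (u - t) P0) (N u) (g u);
         Q1 = distr (evolve K t (u - t) P1) (N u) (g u)
     in \<exists>psi. psi \<in> measurable (PiM {..<n} (\<lambda>_. N u)) (count_space UNIV)
              \<and> total_error n Q0 Q1 psi \<le> eps)"

end

theory Submission
  imports Defs
begin

lemma chi2_dens:
  assumes P: "prob_space P" and Q: "prob_space Q" and sPQ: "sets P = sets Q"
    and ac: "absolutely_continuous Q P" and fin: "chi2 P Q \<noteq> \<infinity>"
  defines "f \<equiv> \<lambda>x. enn2real (RN_deriv Q P x)"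
  shows "P = density Q (\<lambda>x. ennreal (f x))"
    and "f \<in> borel_measurable Q"
    and "(\<integral>\<^sup>+x. ennreal (f x) \<partial>Q) = 1"
    and "(\<integral>\<^sup>+x. ennreal ((f x)\<^sup>2) \<partial>Q) = 1 + chi2 P Q"
proof -
  interpret Q: prob_space Q by fact
  interpret P: prob_space P by fact
  have d: "density Q (RN_deriv Q P) = P"
    using Q.density_RN_deriv[OF ac sPQ] .
  have ae: "AE x in Q. RN_deriv Q P x \<noteq> \<infinity>"
    by (rule Q.RN_deriv_finite[OF _ ac sPQ]) (simp add: P.sigma_finite_measure_axioms)
  have "density Q (\<lambda>x. ennreal (f x)) = density Q (RN_deriv Q P)"
    by (rule density_cong) (use ae in \<open>auto simp: f_def less_top\<close>)
  then show P1: "P = density Q (\<lambda>x. ennreal (f x))" using d by simp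
  show fm: "f \<in> borel_measurable Q" unfolding f_def by measurable
  have fm2: "(\<lambda>x. (f x)\<^sup>2) \<in> borel_measurable Q" using fm by (intro borel_measurable_power)
  have fm3: "(\<lambda>x. (f x - 1)\<^sup>2) \<in> borel_measurable Q" using fm by (intro borel_measurable_power borel_measurable_diff) auto
  have "(\<integral>\<^sup>+x. ennreal (f x) \<partial>Q) = emeasure (density Q (\<lambda>x. ennreal (f x))) (space Q)"
    using fm by (subst emeasure_density) (auto intro!: nn_integral_cong)
  also have "\<dots> = 1" using P1[symmetric] P.emeasure_space_1 sets_eq_imp_space_eq[OF sPQ] by simp
  finally show int1: "(\<integral>\<^sup>+x. ennreal (f x) \<partial>Q) = 1" .
  have c: "chi2 P Q = (\<integral>\<^sup>+x. ennreal ((f x - 1)\<^sup>2) \<partial>Q)"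
    using ac by (simp add: chi2_def f_def)
  have "(\<integral>\<^sup>+x. ennreal ((f x)\<^sup>2) \<partial>Q) + 1 = (\<integral>\<^sup>+x. ennreal ((f x)\<^sup>2) + 1 \<partial>Q)"
    using fm2 by (subst nn_integral_add) (auto simp: Q.emeasure_space_1 intro: measurable_compose[OF _ measurable_ennreal])
  also have "\<dots> = (\<integral>\<^sup>+x. ennreal ((f x - 1)\<^sup>2) + 2 * ennreal (f x) \<partial>Q)"
  proof (rule nn_integral_cong)
    fix x
    have f0: "f x \<ge> 0" by (simp add: f_def)
    have "ennreal ((f x)\<^sup>2) + 1 = ennreal ((f x)\<^sup>2 + 1)" by (simp add: ennreal_plus)
    also have "(f x)\<^sup>2 + 1 = (f x - 1)\<^sup>2 + 2 * f x" by (simp add: power2_eq_square algebra_simps)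
    also have "ennreal \<dots> = ennreal ((f x - 1)\<^sup>2) + 2 * ennreal (f x)"
      using f0 by (simp add: ennreal_plus ennreal_mult)
    finally show "ennreal ((f x)\<^sup>2) + 1 = ennreal ((f x - 1)\<^sup>2) + 2 * ennreal (f x)" .
  qed
  also have "\<dots> = chi2 P Q + 2"
  proof -
    have m1: "(\<lambda>x. ennreal ((f x - 1)\<^sup>2)) \<in> borel_measurable Q"
      using fm3 by (rule measurable_compose[OF _ measurable_ennreal])
    have m2: "(\<lambda>x. ennreal (f x)) \<in> borel_measurable Q"
      using fm by (rule measurable_compose[OF _ measurable_ennreal])
    have m3: "(\<lambda>x. 2 * ennreal (f x)) \<in> borel_measurable Q"
      using m2 by (rule borel_measurable_times_ennreal[OF borel_measurable_const])
    have "(\<integral>\<^sup>+x. ennreal ((f x - 1)\<^sup>2) + 2 * ennreal (f x) \<partial>Q)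
        = (\<integral>\<^sup>+x. ennreal ((f x - 1)\<^sup>2) \<partial>Q) + (\<integral>\<^sup>+x. 2 * ennreal (f x) \<partial>Q)"
      by (rule nn_integral_add[OF m1 m3])
    also have "(\<integral>\<^sup>+x. 2 * ennreal (f x) \<partial>Q) = 2 * (\<integral>\<^sup>+x. ennreal (f x) \<partial>Q)"
      by (rule nn_integral_cmult[OF m2])
    finally show ?thesis by (simp only: c int1 mult_1_right)
  qed
  also have "chi2 P Q + 2 = chi2 P Q + (1 + 1)" by (simp only: one_add_one)
  also have "\<dots> = 1 + (1 + chi2 P Q)" by (simp only: ac_simps)
  finally have "1 + (\<integral>\<^sup>+x. ennreal ((f x)\<^sup>2) \<partial>Q) = 1 + (1 + chi2 P Q)"
    by (simp only: ac_simps)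
  then show "(\<integral>\<^sup>+x. ennreal ((f x)\<^sup>2) \<partial>Q) = 1 + chi2 P Q"
    unfolding ennreal_add_left_cancel by auto
qed

lemma chi2_self:
  assumes P: "prob_space P"
  shows "chi2 P P = 0"
proof -
  interpret P: prob_space P by fact
  have ac: "absolutely_continuous P P" by (simp add: absolutely_continuous_def)
  have "AE x in P. 1 = RN_deriv P P x"
    by (rule P.RN_deriv_unique) (auto simp: density_1)
  then have "AE x in P. ennreal ((enn2real (RN_deriv P P x) - 1)\<^sup>2) = 0"
    by (auto elim!: AE_mp)
  then show ?thesis using ac by (simp add: chi2_def nn_integral_0_iff_AE)
qed

lemma chi2_zero:
  assumes P: "prob_space P" and Q: "prob_space Q" and sPQ: "sets P = sets Q"
    and ac: "absolutely_continuous Q P" and z: "chi2 P Q = 0"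
  shows "P = Q"
proof -
  define f where "f = (\<lambda>x. enn2real (RN_deriv Q P x))"
  have fin: "chi2 P Q \<noteq> \<infinity>" using z by simp
  note d = chi2_dens[OF P Q sPQ ac fin, folded f_def]
  have fm3: "(\<lambda>x. ennreal ((f x - 1)\<^sup>2)) \<in> borel_measurable Q" using d(2) by (intro borel_measurable_power borel_measurable_diff measurable_compose[OF _ measurable_ennreal]) auto
  have "(\<integral>\<^sup>+x. ennreal ((f x - 1)\<^sup>2) \<partial>Q) = 0"
    using z ac by (simp add: chi2_def f_def)
  then have "AE x in Q. ennreal ((f x - 1)\<^sup>2) = 0"
    using nn_integral_0_iff_AE[OF fm3] by simp
  then have "AE x in Q. ennreal (f x) = 1"
    by (auto elim!: AE_mp)
  then have "density Q (\<lambda>x. ennreal (f x)) = density Q (\<lambda>_. 1)"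
  proof (intro density_cong)
    show "(\<lambda>x. ennreal (f x)) \<in> borel_measurable Q" using d(2) by (intro measurable_compose[OF _ measurable_ennreal])
  qed (auto elim!: AE_mp)
  then show ?thesis using d(1) by (simp add: density_1 f_def)
qed

lemma bind_prob_alg:
  assumes "P \<in> space (prob_algebra M)" "K \<in> M \<rightarrow>\<^sub>M prob_algebra M"
  shows "P \<bind> K \<in> space (prob_algebra M)"
  using measurable_bind_prob_space[OF measurable_const, OF assms, THEN measurable_space,
      of undefined "count_space UNIV"] by simp

lemma contract_step:
  assumes P: "P \<in> space (prob_algebra M)" and Q: "Q \<in> space (prob_algebra M)"
    and K: "K \<in> M \<rightarrow>\<^sub>M prob_algebra M" and eta: "eta_chi2 M K \<le> ennreal \<eta>" and eta0: "0 \<le> \<eta>"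
    and c: "chi2 P Q \<le> ennreal r" and r0: "0 \<le> r"
  shows "chi2 (P \<bind> K) (Q \<bind> K) \<le> ennreal (\<eta> * r)"
proof -
  have fin: "chi2 P Q < \<infinity>" using c by (simp add: le_less_trans)
  then have ac: "absolutely_continuous Q P" by (auto simp: chi2_def split: if_splits)
  have pP: "prob_space P" "prob_space Q" "sets P = sets Q"
    using P Q by (auto simp: space_prob_algebra)
  show ?thesis
  proof (cases "chi2 P Q = 0")
    case True
    then have "P = Q" using chi2_zero[OF pP ac] by simp
    then have "chi2 (P \<bind> K) (Q \<bind> K) = 0"
      using chi2_self bind_prob_alg[OF Q K] by (auto simp: space_prob_algebra)
    then show ?thesis by simp
  next
    case False
    then have pos: "0 < chi2 P Q" by (simp add: zero_less_iff_neq_zero)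
    have "chi2 (P \<bind> K) (Q \<bind> K) / chi2 P Q \<le> eta_chi2 M K"
      unfolding eta_chi2_def
      by (rule SUP_upper2[where i="(P, Q)"]) (use P Q ac pos fin in auto)
    also have "\<dots> \<le> ennreal \<eta>" by (rule eta)
    finally have le: "chi2 (P \<bind> K) (Q \<bind> K) / chi2 P Q \<le> ennreal \<eta>" .
    have "chi2 (P \<bind> K) (Q \<bind> K) = chi2 (P \<bind> K) (Q \<bind> K) / chi2 P Q * chi2 P Q"
      using pos fin by (simp add: ennreal_divide_times ennreal_divide_self)
    also have "\<dots> \<le> ennreal \<eta> * ennreal r"
      by (intro mult_mono le c) auto
    also have "\<dots> = ennreal (\<eta> * r)" using eta0 r0 by (simp add: ennreal_mult)
    finally show ?thesis .
  qed
qed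

lemma prod_density:
  assumes P: "prob_space P" and Q: "prob_space Q" and sPQ: "sets P = sets Q"
    and Pd: "P = density Q (\<lambda>x. ennreal (f x))" and fm: "f \<in> borel_measurable Q"
    and f0: "\<And>x. 0 \<le> f x" and I: "finite I"
  shows "density (PiM I (\<lambda>_. Q)) (\<lambda>x. ennreal (\<Prod>i\<in>I. f (x i))) = PiM I (\<lambda>_. P)"
proof -
  interpret PP: product_prob_space "\<lambda>_. P" by (intro product_prob_spaceI) (simp add: P)
  interpret QQ: product_prob_space "\<lambda>_. Q" by (intro product_prob_spaceI) (simp add: Q)
  have comp: "(\<lambda>x. f (x i)) \<in> borel_measurable (PiM I (\<lambda>_. Q))" if "i \<in> I" for i
    using measurable_compose[OF measurable_component_singleton[of i I "\<lambda>_. Q"] fm] that by simp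
  have Fm: "(\<lambda>x. ennreal (\<Prod>i\<in>I. f (x i))) \<in> borel_measurable (PiM I (\<lambda>_. Q))"
    using fm by (intro measurable_compose[OF _ measurable_ennreal] borel_measurable_prod comp) auto
  show ?thesis
  proof (rule PP.PiM_eqI[OF I])
    show "sets (density (PiM I (\<lambda>_. Q)) (\<lambda>x. ennreal (\<Prod>i\<in>I. f (x i)))) = sets (PiM I (\<lambda>_. P))"
      using sPQ by (simp only: sets_density) (intro sets_PiM_cong; simp)
  next
    fix A assume A: "\<And>i. i \<in> I \<Longrightarrow> A i \<in> sets P"
    then have AQ: "\<And>i. i \<in> I \<Longrightarrow> A i \<in> sets Q" using sPQ by simp
    have PiA: "Pi\<^sub>E I A \<in> sets (PiM I (\<lambda>_. Q))"
      using AQ by (intro sets_PiM_I_finite I) auto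
    have "emeasure (density (PiM I (\<lambda>_. Q)) (\<lambda>x. ennreal (\<Prod>i\<in>I. f (x i)))) (Pi\<^sub>E I A)
        = (\<integral>\<^sup>+x. ennreal (\<Prod>i\<in>I. f (x i)) * indicator (Pi\<^sub>E I A) x \<partial>PiM I (\<lambda>_. Q))"
      using Fm PiA by (simp add: emeasure_density)
    also have "\<dots> = (\<integral>\<^sup>+x. (\<Prod>i\<in>I. ennreal (f (x i)) * indicator (A i) (x i)) \<partial>PiM I (\<lambda>_. Q))"
    proof (rule nn_integral_cong)
      fix x assume x: "x \<in> space (PiM I (\<lambda>_. Q))"
      have "indicator (Pi\<^sub>E I A) x = (\<Prod>i\<in>I. indicator (A i) (x i) :: ennreal)"
      proof (cases "x \<in> Pi\<^sub>E I A")
        case True then show ?thesis by (auto simp: indicator_def PiE_iff)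
      next
        case False
        with x obtain j where "j \<in> I" "x j \<notin> A j" by (auto simp: space_PiM PiE_iff)
        then show ?thesis using False I by (auto simp: indicator_def intro!: prod_zero[symmetric])
      qed
      then show "ennreal (\<Prod>i\<in>I. f (x i)) * indicator (Pi\<^sub>E I A) x
          = (\<Prod>i\<in>I. ennreal (f (x i)) * indicator (A i) (x i))"
        using f0 by (simp add: prod.distrib prod_ennreal)
    qed
    also have "\<dots> = (\<Prod>i\<in>I. \<integral>\<^sup>+y. ennreal (f y) * indicator (A i) y \<partial>Q)"
      by (rule QQ.product_nn_integral_prod[OF I]) (use fm AQ in \<open>auto intro!: borel_measurable_times_ennreal borel_measurable_indicator measurable_compose[OF fm measurable_ennreal]\<close>)
    also have "\<dots> = (\<Prod>i\<in>I. emeasure P (A i))"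
      by (rule prod.cong) (use AQ fm in \<open>simp_all add: Pd emeasure_density\<close>)
    finally show "emeasure (density (PiM I (\<lambda>_. Q)) (\<lambda>x. ennreal (\<Prod>i\<in>I. f (x i)))) (Pi\<^sub>E I A)
        = (\<Prod>i\<in>I. emeasure P (A i))" .
  qed
qed


lemma core_ineq:
  assumes P: "prob_space P" and Q: "prob_space Q" and sPQ: "sets P = sets Q"
    and ac: "absolutely_continuous Q P" and cc: "chi2 P Q = ennreal c" and c0: "0 \<le> c"
    and B: "B \<in> sets (PiM {..<n} (\<lambda>_. Q))" and l0: "0 < l"
  shows "2 * l * (measure (PiM {..<n} (\<lambda>_. Q)) B - measure (PiM {..<n} (\<lambda>_. P)) B) + 1
          \<le> l\<^sup>2 / 4 + (1 + c) ^ n"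
proof -
  define I where "I = {..<n}"
  define Qn where "Qn = PiM I (\<lambda>_. Q)"
  define Pn where "Pn = PiM I (\<lambda>_. P)"
  define f where "f = (\<lambda>x. enn2real (RN_deriv Q P x))"
  define Fr where "Fr = (\<lambda>x. \<Prod>i\<in>I. f (x i))"
  have fin: "chi2 P Q \<noteq> \<infinity>" using cc by simp
  note d = chi2_dens[OF P Q sPQ ac fin, folded f_def]
  have Pd: "P = density Q (\<lambda>x. ennreal (f x))" using d(1) by (simp add: f_def)
  have fm: "f \<in> borel_measurable Q" using d(2) by (simp add: f_def)
  have int1: "(\<integral>\<^sup>+x. ennreal (f x) \<partial>Q) = 1" using d(3) by (simp add: f_def)
  have int2: "(\<integral>\<^sup>+x. ennreal ((f x)\<^sup>2) \<partial>Q) = ennreal (1 + c)" using d(4) cc c0 by (simp add: f_def ennreal_plus)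
  have f0: "\<And>x. 0 \<le> f x" by (simp add: f_def)
  have Ifin: "finite I" by (simp add: I_def)
  interpret QQ: product_prob_space "\<lambda>_. Q" by (intro product_prob_spaceI) (simp add: Q)
  interpret Qn: prob_space Qn unfolding Qn_def by (rule prob_space_PiM) (rule Q)
  interpret Pn: prob_space Pn unfolding Pn_def by (rule prob_space_PiM) (rule P)
  have PnD: "Pn = density Qn (\<lambda>x. ennreal (Fr x))"
    unfolding Pn_def Qn_def Fr_def by (rule prod_density[OF P Q sPQ Pd fm f0 Ifin, symmetric])
  have comp: "(\<lambda>x. f (x i)) \<in> borel_measurable Qn" if "i \<in> I" for i
    using measurable_compose[OF measurable_component_singleton[of i I "\<lambda>_. Q"] fm] that by (simp add: Qn_def)
  have Frm: "Fr \<in> borel_measurable Qn"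
    unfolding Fr_def by (intro borel_measurable_prod comp) auto
  have Fr0: "\<And>x. 0 \<le> Fr x" unfolding Fr_def by (simp add: f0 prod_nonneg)
  have fm2: "(\<lambda>y. ennreal (f y)) \<in> borel_measurable Q" using fm by (rule measurable_compose[OF _ measurable_ennreal])
  have fm3: "(\<lambda>y. ennreal ((f y)\<^sup>2)) \<in> borel_measurable Q"
    using fm by (intro measurable_compose[OF _ measurable_ennreal] borel_measurable_power)
  have HF: "has_bochner_integral Qn Fr 1"
  proof (rule has_bochner_integral_nn_integral[OF Frm])
    have "(\<integral>\<^sup>+x. ennreal (Fr x) \<partial>Qn) = (\<integral>\<^sup>+x. (\<Prod>i\<in>I. ennreal (f (x i))) \<partial>Qn)"
      unfolding Fr_def by (simp add: prod_ennreal f0)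
    also have "\<dots> = (\<Prod>i\<in>I. \<integral>\<^sup>+y. ennreal (f y) \<partial>Q)"
      unfolding Qn_def by (rule QQ.product_nn_integral_prod[OF Ifin]) (rule fm2)
    also have "\<dots> = 1" by (simp add: int1)
    finally show "(\<integral>\<^sup>+x. ennreal (Fr x) \<partial>Qn) = ennreal 1" by simp
  qed (auto simp: Fr0)
  have HF2: "has_bochner_integral Qn (\<lambda>x. (Fr x)\<^sup>2) ((1 + c) ^ n)"
  proof (rule has_bochner_integral_nn_integral)
    show "(\<lambda>x. (Fr x)\<^sup>2) \<in> borel_measurable Qn" using Frm by (rule borel_measurable_power)
    have "(\<integral>\<^sup>+x. ennreal ((Fr x)\<^sup>2) \<partial>Qn) = (\<integral>\<^sup>+x. (\<Prod>i\<in>I. ennreal ((f (x i))\<^sup>2)) \<partial>Qn)"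
      unfolding Fr_def by (simp add: prod_ennreal f0 prod_power_distrib)
    also have "\<dots> = (\<Prod>i\<in>I. \<integral>\<^sup>+y. ennreal ((f y)\<^sup>2) \<partial>Q)"
      unfolding Qn_def by (rule QQ.product_nn_integral_prod[OF Ifin]) (rule fm3)
    also have "\<dots> = ennreal (1 + c) ^ n" by (simp only: int2 I_def prod_constant card_lessThan)
    also have "\<dots> = ennreal ((1 + c) ^ n)" using c0 by (intro ennreal_power) simp
    finally show "(\<integral>\<^sup>+x. ennreal ((Fr x)\<^sup>2) \<partial>Qn) = ennreal ((1 + c) ^ n)" .
  qed (use c0 in auto)
  have BQ: "B \<in> sets Qn" using B by (simp add: Qn_def I_def)
  have Hb: "has_bochner_integral Qn (indicator B) (measure Qn B)"
    by (rule has_bochner_integral_real_indicator[OF BQ]) (simp add: less_top[symmetric])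
  have HbF: "has_bochner_integral Qn (\<lambda>x. indicator B x * Fr x) (measure Pn B)"
  proof (rule has_bochner_integral_nn_integral)
    show "(\<lambda>x. indicator B x * Fr x) \<in> borel_measurable Qn"
      using Frm BQ by (intro borel_measurable_times borel_measurable_indicator)
    have "(\<integral>\<^sup>+x. ennreal (indicator B x * Fr x) \<partial>Qn) = (\<integral>\<^sup>+x. ennreal (Fr x) * indicator B x \<partial>Qn)"
      by (intro nn_integral_cong) (simp add: indicator_def)
    also have "\<dots> = emeasure Pn B"
      unfolding PnD using Frm BQ by (simp add: emeasure_density)
    also have "\<dots> = ennreal (measure Pn B)"
      by (rule Pn.emeasure_eq_measure)
    finally show "(\<integral>\<^sup>+x. ennreal (indicator B x * Fr x) \<partial>Qn) = ennreal (measure Pn B)" .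
  qed (auto simp: Fr0)
  have H1: "has_bochner_integral Qn (\<lambda>x. 1::real) 1"
    by (rule has_bochner_integral_nn_integral) (auto simp: Qn.emeasure_space_1)
  define q where "q = measure Qn B"
  define p where "p = measure Pn B"
  define S where "S = (1 + c) ^ n"
  define b where "b = (\<lambda>x. indicator B x :: real)"
  have Hb': "has_bochner_integral Qn b q" using Hb by (simp add: b_def q_def)
  have HbF': "has_bochner_integral Qn (\<lambda>x. b x * Fr x) p" using HbF by (simp add: b_def p_def)
  have HF2': "has_bochner_integral Qn (\<lambda>x. (Fr x)\<^sup>2) S" using HF2 by (simp add: S_def)
  have Hlin: "has_bochner_integral Qn (\<lambda>x. (l*l*q*q) * 1 + (-(2*l*l*q)) * b x + (l*l) * b x
      + 1 * (Fr x)\<^sup>2 + (-2) * Fr x + 1 * 1 + (-(2*l*q)) * Fr x + (2*l*q) * 1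
      + (2*l) * (b x * Fr x) + (-(2*l)) * b x)
    ((l*l*q*q) * 1 + (-(2*l*l*q)) * q + (l*l) * q + 1 * S + (-2) * 1 + 1 * 1
      + (-(2*l*q)) * 1 + (2*l*q) * 1 + (2*l) * p + (-(2*l)) * q)"
    by (intro has_bochner_integral_add has_bochner_integral_mult_right H1 HF HF2' Hb' HbF')
  have Hsq: "has_bochner_integral Qn (\<lambda>x. (l * (q - b x) - (Fr x - 1))\<^sup>2)
    ((l*l*q*q) * 1 + (-(2*l*l*q)) * q + (l*l) * q + 1 * S + (-2) * 1 + 1 * 1
      + (-(2*l*q)) * 1 + (2*l*q) * 1 + (2*l) * p + (-(2*l)) * q)"
  proof (rule has_bochner_integral_cong[THEN iffD1, OF refl _ refl Hlin])
    fix x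
    have "b x = 0 \<or> b x = 1" by (simp add: b_def indicator_def)
    then show "(l*l*q*q) * 1 + (-(2*l*l*q)) * b x + (l*l) * b x
      + 1 * (Fr x)\<^sup>2 + (-2) * Fr x + 1 * 1 + (-(2*l*q)) * Fr x + (2*l*q) * 1
      + (2*l) * (b x * Fr x) + (-(2*l)) * b x = (l * (q - b x) - (Fr x - 1))\<^sup>2"
      by (elim disjE) (simp_all add: power2_eq_square algebra_simps)
  qed
  have "0 \<le> integral\<^sup>L Qn (\<lambda>x. (l * (q - b x) - (Fr x - 1))\<^sup>2)"
    by (rule integral_nonneg_AE) simp
  then have V: "0 \<le> (l*l*q*q) * 1 + (-(2*l*l*q)) * q + (l*l) * q + 1 * S + (-2) * 1 + 1 * 1
      + (-(2*l*q)) * 1 + (2*l*q) * 1 + (2*l) * p + (-(2*l)) * q"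
    using has_bochner_integral_integral_eq[OF Hsq] by simp
  have q4: "l\<^sup>2 * (q * (1 - q)) \<le> l\<^sup>2 / 4"
  proof -
    have "q * (1 - q) \<le> 1 / 4" using sum_power2_ge_zero[of "q - 1/2" 0]
      by (simp add: power2_eq_square algebra_simps)
    then have "l\<^sup>2 * (q * (1 - q)) \<le> l\<^sup>2 * (1/4)" by (intro mult_left_mono) auto
    then show ?thesis by simp
  qed
  have "2 * l * (q - p) + 1 \<le> l\<^sup>2 * (q * (1 - q)) + S"
    using V by (simp add: power2_eq_square algebra_simps)
  then show ?thesis using q4 unfolding q_def p_def S_def Qn_def Pn_def I_def by linarith
qed


lemma test_bound:
  assumes P: "P \<in> space (prob_algebra M)" and Q: "Q \<in> space (prob_algebra M)"
    and ac: "absolutely_continuous Q P" and cc: "chi2 P Q = ennreal c" and c0: "0 \<le> c"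
    and g: "g \<in> M \<rightarrow>\<^sub>M N'"
    and psi: "psi \<in> measurable (PiM {..<n} (\<lambda>_. N')) (count_space UNIV)"
    and err: "total_error n (distr P N' g) (distr Q N' g) psi \<le> \<epsilon>" and e1: "\<epsilon> < 1"
  shows "4 * (1 - \<epsilon>)\<^sup>2 \<le> (1 + c) ^ n - 1"
proof -
  define I where "I = {..<n}"
  have pP: "prob_space P" "sets P = sets M" using P by (auto simp: space_prob_algebra)
  have pQ: "prob_space Q" "sets Q = sets M" using Q by (auto simp: space_prob_algebra)
  define N2 where "N2 = distr Q N' g"
  have gQ: "g \<in> Q \<rightarrow>\<^sub>M N'" using g by (simp only: measurable_cong_sets[OF pQ(2) refl])
  have gP: "g \<in> P \<rightarrow>\<^sub>M N'" using g by (simp only: measurable_cong_sets[OF pP(2) refl])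
  have sN2: "sets N2 = sets N'" by (simp add: N2_def)
  have pN2: "prob_space N2" unfolding N2_def by (rule prob_space.prob_space_distr[OF pQ(1) gQ])
  have gP2: "g \<in> P \<rightarrow>\<^sub>M N2" using g by (simp only: measurable_cong_sets[OF pP(2) sN2])
  have gQ2: "g \<in> Q \<rightarrow>\<^sub>M N2" using g by (simp only: measurable_cong_sets[OF pQ(2) sN2])
  have dP: "distr P N' g = distr P N2 g" by (rule distr_cong) (simp_all add: sN2)
  have dQ: "distr Q N' g = distr Q N2 g" by (rule distr_cong) (simp_all add: sN2)
  define G where "G = compose I g"
  have cG: "G = (\<lambda>x. \<lambda>i\<in>I. g (x i))" unfolding G_def by (rule ext) (simp add: compose_def)
  have eqP: "distr (PiM I (\<lambda>_. P)) (PiM I (\<lambda>_. N2)) G = PiM I (\<lambda>_. distr P N2 g)"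
    unfolding G_def by (rule distr_PiM_finite_prob_space') (simp_all add: I_def pP(1) pN2 gP2)
  have eqQ: "distr (PiM I (\<lambda>_. Q)) (PiM I (\<lambda>_. N2)) G = PiM I (\<lambda>_. distr Q N2 g)"
    unfolding G_def by (rule distr_PiM_finite_prob_space') (simp_all add: I_def pQ(1) pN2 gQ2)
  have sPi: "sets (PiM I (\<lambda>_. N2)) = sets (PiM I (\<lambda>_. N'))"
    by (intro sets_PiM_cong) (simp_all add: sN2)
  have psi2: "psi \<in> measurable (PiM I (\<lambda>_. N2)) (count_space UNIV)"
  proof -
    have "psi \<in> measurable (PiM I (\<lambda>_. N')) (count_space UNIV)" using psi by (simp add: I_def)
    then show ?thesis by (simp only: measurable_cong_sets[OF sPi refl])
  qed
  have Gm: "G \<in> PiM I (\<lambda>_. P) \<rightarrow>\<^sub>M PiM I (\<lambda>_. N2)"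
  proof -
    have "(\<lambda>x. \<lambda>i\<in>I. g (x i)) \<in> PiM I (\<lambda>_. P) \<rightarrow>\<^sub>M PiM I (\<lambda>_. N2)"
      by (rule measurable_restrict) (use measurable_compose[OF measurable_component_singleton[of _ I "\<lambda>_. P"] gP2] in simp)
    then show ?thesis by (simp add: cG)
  qed
  have Gm': "G \<in> PiM I (\<lambda>_. Q) \<rightarrow>\<^sub>M PiM I (\<lambda>_. N2)"
  proof -
    have "(\<lambda>x. \<lambda>i\<in>I. g (x i)) \<in> PiM I (\<lambda>_. Q) \<rightarrow>\<^sub>M PiM I (\<lambda>_. N2)"
      by (rule measurable_restrict) (use measurable_compose[OF measurable_component_singleton[of _ I "\<lambda>_. Q"] gQ2] in simp)
    then show ?thesis by (simp add: cG)
  qed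
  define Pn where "Pn = PiM I (\<lambda>_. P)"
  define Qn where "Qn = PiM I (\<lambda>_. Q)"
  interpret Qn: prob_space Qn unfolding Qn_def by (rule prob_space_PiM) (rule pQ(1))
  have sPQn: "sets Pn = sets Qn" unfolding Pn_def Qn_def
    by (intro sets_PiM_cong) (simp_all add: pP(2) pQ(2))
  have spPQ: "space Pn = space Qn" using sets_eq_imp_space_eq[OF sPQn] .
  define S where "S = space (PiM I (\<lambda>_. N2))"
  define A where "A = {x \<in> S. psi x}"
  have A: "A \<in> sets (PiM I (\<lambda>_. N2))" unfolding A_def S_def using psi2 by (rule predE)
  define B where "B = G -` A \<inter> space Qn"
  have B: "B \<in> sets Qn" unfolding B_def Qn_def by (rule measurable_sets[OF Gm' A])
  have BP: "G -` A \<inter> space Pn = B" using spPQ by (simp add: B_def)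
  have t1: "measure (PiM {..<n} (\<lambda>_. distr P N' g)) {x \<in> space (PiM {..<n} (\<lambda>_. distr P N' g)). psi x}
      = measure Pn B"
  proof -
    have e: "PiM {..<n} (\<lambda>_. distr P N' g) = distr Pn (PiM I (\<lambda>_. N2)) G"
      using eqP by (simp add: dP I_def Pn_def)
    have "{x \<in> space (distr Pn (PiM I (\<lambda>_. N2)) G). psi x} = A" by (simp add: A_def S_def)
    then show ?thesis unfolding e using measure_distr[OF Gm[folded Pn_def] A] BP by simp
  qed
  have t2: "measure (PiM {..<n} (\<lambda>_. distr Q N' g)) {x \<in> space (PiM {..<n} (\<lambda>_. distr Q N' g)). \<not> psi x}
      = 1 - measure Qn B"
  proof -
    have e: "PiM {..<n} (\<lambda>_. distr Q N' g) = distr Qn (PiM I (\<lambda>_. N2)) G"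
      using eqQ by (simp add: dQ I_def Qn_def)
    have "{x \<in> space (distr Qn (PiM I (\<lambda>_. N2)) G). \<not> psi x} = S - A" by (auto simp: A_def S_def)
    moreover have "S - A \<in> sets (PiM I (\<lambda>_. N2))" using A unfolding S_def by auto
    moreover have "G -` (S - A) \<inter> space Qn = space Qn - B"
      using measurable_space[OF Gm'] by (auto simp: B_def S_def Qn_def)
    ultimately show ?thesis unfolding e using measure_distr[OF Gm'[folded Qn_def]] Qn.prob_compl[OF B]
      by simp
  qed
  have "measure Pn B + (1 - measure Qn B) \<le> \<epsilon>"
    using err unfolding total_error_def t1 t2 .
  then have qp: "1 - \<epsilon> \<le> measure Qn B - measure Pn B" by simp
  define l where "l = 4 * (1 - \<epsilon>)"
  have l0: "0 < l" using e1 by (simp add: l_def)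
  have core: "2 * l * (measure Qn B - measure Pn B) + 1 \<le> l\<^sup>2 / 4 + (1 + c) ^ n"
    using core_ineq[OF pP(1) pQ(1) _ ac cc c0 _ l0, of B n] pP(2) pQ(2) B
    unfolding Qn_def Pn_def I_def by simp
  have "2 * l * (1 - \<epsilon>) \<le> 2 * l * (measure Qn B - measure Pn B)"
    using qp l0 by (intro mult_left_mono) auto
  moreover have "l\<^sup>2 / 4 = 4 * (1 - \<epsilon>)\<^sup>2" "2 * l * (1 - \<epsilon>) = 8 * (1 - \<epsilon>)\<^sup>2"
    by (simp_all add: l_def power2_eq_square field_simps)
  ultimately show ?thesis using core by linarith
qed


lemma evolve_bound:
  assumes kernels: "\<And>j. j < H \<Longrightarrow> K j \<in> M \<rightarrow>\<^sub>M prob_algebra M"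
    and contraction: "\<And>j. j < H \<Longrightarrow> eta_chi2 M (K j) \<le> ennreal \<eta>"
    and eta0: "0 \<le> \<eta>"
    and PA: "PA \<in> space (prob_algebra M)" and PB: "PB \<in> space (prob_algebra M)"
    and c: "chi2 PA PB \<le> ennreal D" and D0: "0 \<le> D"
  shows "t + k \<le> H \<Longrightarrow> evolve K t k PA \<in> space (prob_algebra M) \<and> evolve K t k PB \<in> space (prob_algebra M)
     \<and> chi2 (evolve K t k PA) (evolve K t k PB) \<le> ennreal (\<eta> ^ k * D)"
proof (induction k)
  case 0
  then show ?case using PA PB c by simp
next
  case (Suc k)
  then have IH: "evolve K t k PA \<in> space (prob_algebra M)" "evolve K t k PB \<in> space (prob_algebra M)"
     "chi2 (evolve K t k PA) (evolve K t k PB) \<le> ennreal (\<eta> ^ k * D)" by auto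
  have tk: "t + k < H" using Suc.prems by simp
  have "chi2 (evolve K t k PA \<bind> K (t + k)) (evolve K t k PB \<bind> K (t + k)) \<le> ennreal (\<eta> * (\<eta> ^ k * D))"
    by (rule contract_step[OF IH(1,2) kernels[OF tk] contraction[OF tk] eta0 IH(3)])
      (simp add: eta0 D0)
  then show ?case using bind_prob_alg[OF IH(1) kernels[OF tk]] bind_prob_alg[OF IH(2) kernels[OF tk]]
    by (simp add: mult.assoc)
qed

lemma arith_bound:
  fixes a x :: real
  assumes x0: "0 \<le> x" and n1: "1 \<le> n" and a0: "0 < a" and a1: "a < 1"
    and h: "4 * a\<^sup>2 \<le> (1 + x) ^ n - 1"
  shows "a\<^sup>2 \<le> real n * x"
proof (cases "real n * x \<le> 1")
  case False
  have "a\<^sup>2 \<le> 1" using a0 a1 by (simp add: power_le_one)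
  then show ?thesis using False by linarith
next
  case True
  have y0: "0 \<le> real n * x" using x0 by simp
  have "(1 + x) ^ n \<le> exp x ^ n"
    using x0 by (intro power_mono) (simp_all add: exp_ge_add_one_self add.commute)
  also have "\<dots> = exp (real n * x)" by (simp add: exp_of_nat_mult)
  finally have e1: "(1 + x) ^ n \<le> exp (real n * x)" .
  have e2: "exp (real n * x) \<le> 1 + real n * x + (real n * x)\<^sup>2" by (rule exp_bound[OF y0 True])
  have e3: "(real n * x)\<^sup>2 \<le> real n * x" using y0 True
    by (simp add: power2_eq_square mult_left_le_one_le)
  show ?thesis using h e1 e2 e3 y0 by linarith
qed

lemma next_insp_props:
  assumes T: "T \<subseteq> {1..H - 1}" and t: "t < H"
  shows "t < next_insp T H t" "next_insp T H t \<le> H" "next_insp T H t \<in> T \<union> {H}"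
proof -
  let ?U = "{u \<in> T \<union> {H}. t < u}"
  have "?U \<subseteq> {0..H}" using T by auto
  then have fin: "finite ?U" by (rule finite_subset) simp
  have ne: "H \<in> ?U" using t by simp
  have "Min ?U \<in> ?U" using fin ne by (intro Min_in) auto
  then show "t < next_insp T H t" "next_insp T H t \<in> T \<union> {H}" by (auto simp: next_insp_def)
  show "next_insp T H t \<le> H" unfolding next_insp_def using fin ne by (rule Min_le)
qed

lemma count_aux:
  fixes Hc :: real
  assumes T: "T \<subseteq> {1..H - 1}" and gap: "\<And>t. t < H \<Longrightarrow> real (next_insp T H t - t) \<le> Hc"
  shows "a < H \<Longrightarrow> real (H - a) \<le> real (card {x\<in>T. a < x} + 1) * Hc"
proof (induction "H - a" arbitrary: a rule: less_induct)
  case less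
  define u where "u = next_insp T H a"
  have u: "a < u" "u \<le> H" "u \<in> T \<union> {H}" using next_insp_props[OF T less.prems] by (auto simp: u_def)
  have g: "real (u - a) \<le> Hc" using gap[OF less.prems] by (simp add: u_def)
  have Hc0: "1 \<le> Hc" using g u(1) by linarith
  have finT: "finite T" using T by (auto intro: finite_subset)
  show ?case
  proof (cases "u = H")
    case True
    then have "real (H - a) \<le> 1 * Hc" using g by simp
    also have "\<dots> \<le> real (card {x\<in>T. a < x} + 1) * Hc" using Hc0 by (intro mult_right_mono) auto
    finally show ?thesis .
  next
    case False
    then have uT: "u \<in> T" "u < H" using u by auto
    have IH: "real (H - u) \<le> real (card {x\<in>T. u < x} + 1) * Hc"
      using less.hyps[of u] uT u(1) by simp
    have sub: "insert u {x\<in>T. u < x} \<subseteq> {x\<in>T. a < x}" using uT u(1) by auto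
    have "card (insert u {x\<in>T. u < x}) \<le> card {x\<in>T. a < x}"
      by (rule card_mono[OF _ sub]) (use finT in auto)
    then have cc: "card {x\<in>T. u < x} + 1 \<le> card {x\<in>T. a < x}"
      using finT by (simp add: card_insert_if)
    have "real (H - a) = real (u - a) + real (H - u)" using u uT by simp
    also have "\<dots> \<le> Hc + real (card {x\<in>T. u < x} + 1) * Hc" using g IH by linarith
    also have "\<dots> = real (card {x\<in>T. u < x} + 1 + 1) * Hc" by (simp add: algebra_simps)
    also have "\<dots> \<le> real (card {x\<in>T. a < x} + 1) * Hc"
      using cc Hc0 by (intro mult_right_mono) auto
    finally show ?thesis .
  qed
qed

theorem corollary7:
  fixes M :: "'a measure" and N :: "nat \<Rightarrow> 'b measure"
    and K :: "nat \<Rightarrow> 'a \<Rightarrow> 'a measure" and g :: "nat \<Rightarrow> 'a \<Rightarrow> 'b"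
    and T :: "nat set" and H n :: nat and \<eta> D2 \<epsilon> :: real
    and P0 P1 :: "nat \<Rightarrow> 'a measure"
  assumes kernels: "\<And>j. j < H \<Longrightarrow> K j \<in> M \<rightarrow>\<^sub>M prob_algebra M"
    and contraction: "\<And>j. j < H \<Longrightarrow> eta_chi2 M (K j) \<le> ennreal \<eta>"
    and eta_pos: "0 < \<eta>" and eta_lt1: "\<eta> < 1"
    and schedule: "T \<subseteq> {1..H - 1}"
    and outputs: "\<And>u. u \<in> T \<union> {H} \<Longrightarrow> g u \<in> M \<rightarrow>\<^sub>M N u"
    and n_ge1: "1 \<le> n"
    and D2_pos: "0 < D2"
    and eps_pos: "0 < \<epsilon>" and eps_lt: "\<epsilon> < 1/2"
    and P0_prob: "\<And>t. t < H \<Longrightarrow> P0 t \<in> space (prob_algebra M)"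
    and P1_prob: "\<And>t. t < H \<Longrightarrow> P1 t \<in> space (prob_algebra M)"
    and abs_cont: "\<And>t. t < H \<Longrightarrow> absolutely_continuous (P1 t) (P0 t)"
    and chi2_eq: "\<And>t. t < H \<Longrightarrow> chi2 (P0 t) (P1 t) = ennreal D2"
    and dist: "\<And>t. t < H \<Longrightarrow> distinguishable M N K g T H (P0 t) (P1 t) n \<epsilon> t"
  shows "int (card T) \<ge>
           \<lceil>real H / ((ln (real n * D2) - 2 * ln (1 - \<epsilon>)) / ln (1 / \<eta>))\<rceil> - 1"
proof -
  define Hc where "Hc = (ln (real n * D2) - 2 * ln (1 - \<epsilon>)) / ln (1 / \<eta>)"
  have lnpos: "0 < ln (1 / \<eta>)" using eta_pos eta_lt1 by (simp add: ln_div)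
  have gap: "real (next_insp T H t - t) \<le> Hc" if t: "t < H" for t
  proof -
    define u where "u = next_insp T H t"
    have u: "t < u" "u \<le> H" "u \<in> T \<union> {H}" using next_insp_props[OF schedule t] by (auto simp: u_def)
    define k where "k = u - t"
    have tk: "t + k \<le> H" using u by (simp add: k_def)
    define E0 where "E0 = evolve K t k (P0 t)"
    define E1 where "E1 = evolve K t k (P1 t)"
    have ev: "E0 \<in> space (prob_algebra M)" "E1 \<in> space (prob_algebra M)"
        "chi2 E0 E1 \<le> ennreal (\<eta> ^ k * D2)"
    proof -
      have "evolve K t k (P0 t) \<in> space (prob_algebra M) \<and> evolve K t k (P1 t) \<in> space (prob_algebra M)
         \<and> chi2 (evolve K t k (P0 t)) (evolve K t k (P1 t)) \<le> ennreal (\<eta> ^ k * D2)"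
        by (rule evolve_bound[where H=H and K=K and M=M and \<eta>=\<eta> and D=D2 and PA="P0 t" and PB="P1 t"])
          (use kernels contraction eta_pos D2_pos chi2_eq[OF t] P0_prob[OF t] P1_prob[OF t] tk in auto)
      then show "E0 \<in> space (prob_algebra M)" "E1 \<in> space (prob_algebra M)"
        "chi2 E0 E1 \<le> ennreal (\<eta> ^ k * D2)" by (auto simp: E0_def E1_def)
    qed
    have fin: "chi2 E0 E1 \<noteq> \<infinity>" using ev(3) by (auto simp: top_unique)
    then have ac: "absolutely_continuous E1 E0" by (auto simp: chi2_def split: if_splits)
    define c where "c = enn2real (chi2 E0 E1)"
    have cc: "chi2 E0 E1 = ennreal c" using fin by (simp add: c_def ennreal_enn2real_if)
    have c0: "0 \<le> c" by (simp add: c_def)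
    have cle: "c \<le> \<eta> ^ k * D2" using ev(3) eta_pos D2_pos unfolding cc
      by (subst (asm) ennreal_le_iff) auto
    obtain psi where psi: "psi \<in> measurable (PiM {..<n} (\<lambda>_. N u)) (count_space UNIV)"
        and err: "total_error n (distr E0 (N u) (g u)) (distr E1 (N u) (g u)) psi \<le> \<epsilon>"
      using dist[OF t] unfolding distinguishable_def Let_def u_def[symmetric] k_def[symmetric]
        E0_def[symmetric] E1_def[symmetric] by blast
    have tb: "4 * (1 - \<epsilon>)\<^sup>2 \<le> (1 + c) ^ n - 1"
      by (rule test_bound[OF ev(1,2) ac cc c0 outputs[OF u(3)] psi err]) (use eps_lt in simp)
    have ab: "(1 - \<epsilon>)\<^sup>2 \<le> real n * c"
      by (rule arith_bound[OF c0 n_ge1 _ _ tb]) (use eps_pos eps_lt in auto)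
    also have "\<dots> \<le> real n * (\<eta> ^ k * D2)" using cle by (intro mult_left_mono) auto
    finally have main: "(1 - \<epsilon>)\<^sup>2 \<le> real n * (\<eta> ^ k * D2)" .
    have npos: "0 < real n" using n_ge1 by simp
    have e0: "0 < 1 - \<epsilon>" using eps_lt by simp
    have "ln ((1 - \<epsilon>)\<^sup>2) \<le> ln (real n * (\<eta> ^ k * D2))"
      using main e0 npos eta_pos D2_pos by (subst ln_le_cancel_iff) auto
    also have "ln (real n * (\<eta> ^ k * D2)) = ln (real n * D2) + real k * ln \<eta>"
      using npos eta_pos D2_pos by (simp add: ln_mult ln_realpow)
    finally have "2 * ln (1 - \<epsilon>) \<le> ln (real n * D2) + real k * ln \<eta>"
      using e0 by (simp add: ln_realpow)
    moreover have "ln (1 / \<eta>) = - ln \<eta>" using eta_pos by (simp add: ln_div)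
    ultimately have "real k * ln (1 / \<eta>) \<le> ln (real n * D2) - 2 * ln (1 - \<epsilon>)" by simp
    then have "real k \<le> Hc" unfolding Hc_def using lnpos by (simp add: pos_le_divide_eq)
    then show ?thesis by (simp add: k_def u_def)
  qed
  show ?thesis
  proof (cases "H = 0")
    case True
    then show ?thesis by simp
  next
    case False
    then have H0: "0 < H" by simp
    have "real (next_insp T H 0 - 0) \<le> Hc" by (rule gap[OF H0])
    moreover have "0 < next_insp T H 0" using next_insp_props[OF schedule H0] by simp
    ultimately have Hc1: "1 \<le> Hc" by linarith
    have "real (H - 0) \<le> real (card {x\<in>T. 0 < x} + 1) * Hc"
      by (rule count_aux[OF schedule gap H0])
    also have "\<dots> \<le> real (card T + 1) * Hc"
    proof -
      have "finite T" using schedule by (auto intro: finite_subset)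
      then have "card {x\<in>T. 0 < x} \<le> card T" by (intro card_mono) auto
      then show ?thesis using Hc1 by (intro mult_right_mono) auto
    qed
    finally have "real H / Hc \<le> real (card T + 1)" using Hc1 by (simp add: pos_divide_le_eq)
    then have "\<lceil>real H / Hc\<rceil> \<le> int (card T + 1)" by (intro ceiling_le) simp
    then show ?thesis unfolding Hc_def by simp
  qed
qed

end
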